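(* Let $G=(V,E)$ be a finite connected graph with $n$ vertices and maximal degree $\Delta$. Then $\mathcal{AC}(G) \leq 20\,\Delta\, n$.
   Context: Acquaintance time: Let $G=(V,E)$ be a finite connected graph. Initially one agent is placed on each vertex. At any moment, two agents located at the endpoints of a common edge become acquainted (in particular, agents on adjacent vertices at the start are acquainted). In each round one chooses a matching of $G$ (not necessarily maximal), and for every edge of the matching the two agents on its endpoints swap places; after each round, all pairs of agents on adjacent vertices become acquainted. A sequence of matchings after which every pair of agents has been acquainted is a strategy for acquaintance in $G$. The acquaintance time $\mathcal{AC}(G)$ is the minimal number of rounds in a strategy for acquaintance in $G$. *)

theory Defs
  imports Main
begin

definition fin_graph :: "'a set \<Rightarrow> ('a \<Rightarrow> 'a \<Rightarrow> bool) \<Rightarrow> bool" where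
  "fin_graph V E \<longleftrightarrow> finite V \<and> V \<noteq> {} \<and>
     (\<forall>u v. E u v \<longrightarrow> u \<in> V \<and> v \<in> V) \<and>
     (\<forall>u v. E u v \<longrightarrow> E v u) \<and> (\<forall>u. \<not> E u u)"

definition connected_graph :: "'a set \<Rightarrow> ('a \<Rightarrow> 'a \<Rightarrow> bool) \<Rightarrow> bool" where
  "connected_graph V E \<longleftrightarrow> (\<forall>u\<in>V. \<forall>v\<in>V. E\<^sup>*\<^sup>* u v)"

definition degree :: "'a set \<Rightarrow> ('a \<Rightarrow> 'a \<Rightarrow> bool) \<Rightarrow> 'a \<Rightarrow> nat" where
  "degree V E v = card {w \<in> V. E v w}"

definition max_degree :: "'a set \<Rightarrow> ('a \<Rightarrow> 'a \<Rightarrow> bool) \<Rightarrow> nat" where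
  "max_degree V E = Max (degree V E ` V)"

definition is_matching :: "('a \<Rightarrow> 'a \<Rightarrow> bool) \<Rightarrow> 'a set set \<Rightarrow> bool" where
  "is_matching E M \<longleftrightarrow> (\<forall>e\<in>M. \<exists>u v. E u v \<and> e = {u, v}) \<and>
     (\<forall>e1\<in>M. \<forall>e2\<in>M. e1 \<noteq> e2 \<longrightarrow> e1 \<inter> e2 = {})"

definition swap :: "'a set set \<Rightarrow> 'a \<Rightarrow> 'a" where
  "swap M x = (if \<exists>y. y \<noteq> x \<and> {x, y} \<in> M then (THE y. y \<noteq> x \<and> {x, y} \<in> M) else x)"

text \<open>Agents are named by their initial vertices; pos ms t a is the vertex of agent a
after t rounds of the matchings ms 0, ms 1, ...\<close>
fun pos :: "(nat \<Rightarrow> 'a set set) \<Rightarrow> nat \<Rightarrow> 'a \<Rightarrow> 'a" where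
  "pos ms 0 = id"
| "pos ms (Suc t) = swap (ms t) \<circ> pos ms t"

definition acquainted :: "('a \<Rightarrow> 'a \<Rightarrow> bool) \<Rightarrow> (nat \<Rightarrow> 'a set set) \<Rightarrow> nat \<Rightarrow> 'a \<Rightarrow> 'a \<Rightarrow> bool" where
  "acquainted E ms k a b \<longleftrightarrow> (\<exists>t\<le>k. E (pos ms t a) (pos ms t b))"

definition is_strategy :: "'a set \<Rightarrow> ('a \<Rightarrow> 'a \<Rightarrow> bool) \<Rightarrow> (nat \<Rightarrow> 'a set set) \<Rightarrow> nat \<Rightarrow> bool" where
  "is_strategy V E ms k \<longleftrightarrow> (\<forall>i<k. is_matching E (ms i)) \<and>
     (\<forall>a\<in>V. \<forall>b\<in>V. a \<noteq> b \<longrightarrow> acquainted E ms k a b)"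

definition acquaintance_time :: "'a set \<Rightarrow> ('a \<Rightarrow> 'a \<Rightarrow> bool) \<Rightarrow> nat" where
  "acquaintance_time V E = (LEAST k. \<exists>ms. is_strategy V E ms k)"

end

theory Submission
  imports Defs
begin


definition tau :: "nat \<Rightarrow> nat \<Rightarrow> nat \<Rightarrow> nat" where
  "tau n t j = (if even (j + t) \<and> j + 1 < n then j + 1
                else if odd (j + t) \<and> 1 \<le> j then j - 1 else j)"

definition qq :: "nat \<Rightarrow> nat \<Rightarrow> nat \<Rightarrow> nat" where
  "qq n p t = ((if even p then p else 2*n - 1 - p) + t) mod (2*n)"

definition act :: "nat \<Rightarrow> nat \<Rightarrow> nat" where
  "act n q = (if q < n then q else 2*n - 1 - q)"

definition gf :: "nat \<Rightarrow> nat \<Rightarrow> nat \<Rightarrow> nat" where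
  "gf n p t = act n (qq n p t)"

lemma even_mod2n: "even ((x::nat) mod (2*n)) = even x"
proof -
  have "x = 2*n*(x div (2*n)) + x mod (2*n)" by simp
  then show ?thesis by (metis even_add even_mult_iff even_numeral)
qed

lemma qq_par: "p < n \<Longrightarrow> even (qq n p t + t)"
proof -
  assume "p < n"
  have "even ((if even p then p else 2*n - 1 - p) + t + t)"
    using \<open>p < n\<close> by (cases "even p") (auto simp: even_add)
  then show ?thesis unfolding qq_def by (simp add: even_add even_mod2n)
qed


lemma qq_lt: "p < n \<Longrightarrow> qq n p t < 2*n"
  unfolding qq_def by auto

lemma qq_Suc: "p < n \<Longrightarrow> qq n p (Suc t) = (if qq n p t + 1 = 2*n then 0 else qq n p t + 1)"
  unfolding qq_def by (simp add: mod_Suc)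

lemma gf_step: assumes "p < n" shows "gf n p (Suc t) = tau n t (gf n p t)"
proof -
  define q where "q = qq n p t"
  have par: "even (q + t)" using qq_par assms q_def by blast
  have lt: "q < 2*n" using qq_lt assms q_def by blast
  have nx: "qq n p (Suc t) = (if q + 1 = 2*n then 0 else q + 1)"
    using qq_Suc assms q_def by blast
  consider "q + 1 < n" | "q + 1 = n" | "n \<le> q" "q + 1 < 2*n" | "q + 1 = 2*n" using lt by linarith
  then show ?thesis
  proof cases
    case 1 then show ?thesis unfolding gf_def nx q_def[symmetric] using par by (simp add: act_def tau_def)
  next
    case 2 then show ?thesis unfolding gf_def nx q_def[symmetric] using par by (simp add: act_def tau_def)
  next
    case 3
    have e: "odd (2*n - 1 - q + t)" using par 3 by (simp add: even_add)
    show ?thesis unfolding gf_def nx q_def[symmetric] using 3 e by (auto simp add: act_def tau_def)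
  next
    case 4
    have e: "odd (0 + t)" using par 4 by (simp add: even_add) presburger
    show ?thesis unfolding gf_def nx q_def[symmetric] using 4 e by (auto simp add: act_def tau_def)
  qed
qed

lemma gf_lt: "p < n \<Longrightarrow> gf n p t < n"
  unfolding gf_def act_def using qq_lt[of p n t] by auto

lemma gf_0: "p < n \<Longrightarrow> gf n p 0 = p"
  unfolding gf_def act_def qq_def by auto

lemma gf_n: assumes "p < n" shows "gf n p n = n - 1 - p"
proof (cases "even p")
  case True
  then have "qq n p n = p + n" unfolding qq_def using assms by auto
  then show ?thesis unfolding gf_def act_def using assms by auto
next
  case False
  then have "qq n p n = n - 1 - p" unfolding qq_def using assms
    by (simp add: mod_if)
  then show ?thesis unfolding gf_def act_def using assms by auto
qed


lemma tau_cases: "j < n \<Longrightarrow> (even (j+t) \<and> j+1 < n \<and> tau n t j = j+1) \<or>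
   (odd (j+t) \<and> 1 \<le> j \<and> tau n t j = j - 1) \<or> (tau n t j = j \<and> (even (j+t) \<longrightarrow> j + 1 = n) \<and> (odd (j+t) \<longrightarrow> j = 0))"
  unfolding tau_def by auto

lemma tau_inj_aux:
  fixes j k a b t n :: nat
  assumes "(even (j+t) \<and> j+1 < n \<and> a = j+1) \<or>
   (odd (j+t) \<and> 1 \<le> j \<and> a = j - 1) \<or> (a = j \<and> (even (j+t) \<longrightarrow> j + 1 = n) \<and> (odd (j+t) \<longrightarrow> j = 0))"
  "(even (k+t) \<and> k+1 < n \<and> b = k+1) \<or>
   (odd (k+t) \<and> 1 \<le> k \<and> b = k - 1) \<or> (b = k \<and> (even (k+t) \<longrightarrow> k + 1 = n) \<and> (odd (k+t) \<longrightarrow> k = 0))"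
  "a = b" "j < n" "k < n"
  shows "j = k"
proof (rule ccontr)
  assume ne: "j \<noteq> k"
  have p1: "even (j + t) \<longleftrightarrow> odd (Suc j + t)" "even (k + t) \<longleftrightarrow> odd (Suc k + t)" by simp_all
  show False
    using assms(1)
  proof (elim disjE conjE)
    assume j: "even (j+t)" "j+1 < n" "a = j+1"
    from assms(2) show False
    proof (elim disjE conjE)
      assume "even (k+t)" "k+1 < n" "b = k+1" then show False using j assms(3) ne by simp
    next
      assume k: "odd (k+t)" "1 \<le> k" "b = k - 1"
      then have "k = j + 2" using j assms(3) by simp
      then show False using j k by simp
    next
      assume k: "b = k" "even (k+t) \<longrightarrow> k + 1 = n" "odd (k+t) \<longrightarrow> k = 0"
      then have "k = Suc j" using j assms(3) by simp
      then show False using j k assms(5) by simp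
    qed
  next
    assume j: "odd (j+t)" "1 \<le> j" "a = j - 1"
    from assms(2) show False
    proof (elim disjE conjE)
      assume k: "even (k+t)" "k+1 < n" "b = k+1"
      then have "j = k + 2" using j assms(3) by simp
      then show False using j k by simp
    next
      assume "odd (k+t)" "1 \<le> k" "b = k - 1" then show False using j assms(3) ne by simp
    next
      assume k: "b = k" "even (k+t) \<longrightarrow> k + 1 = n" "odd (k+t) \<longrightarrow> k = 0"
      then have "j = Suc k" using j assms(3) by simp
      then show False using j k assms(4) by simp
    qed
  next
    assume j: "a = j" "even (j+t) \<longrightarrow> j + 1 = n" "odd (j+t) \<longrightarrow> j = 0"
    from assms(2) show False
    proof (elim disjE conjE)
      assume k: "even (k+t)" "k+1 < n" "b = k+1"
      then have "j = Suc k" using j assms(3) by simp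
      then show False using j k assms(4) by simp
    next
      assume k: "odd (k+t)" "1 \<le> k" "b = k - 1"
      then have "k = Suc j" using j assms(3) by simp
      then show False using j k assms(5) by simp
    next
      assume "b = k" then show False using j assms(3) ne by simp
    qed
  qed
qed


lemma mod3_eq: fixes a b w :: nat
  assumes "a mod 3 = b mod 3" "a \<le> w" "w \<le> a + 2" "b \<le> w" "w \<le> b + 2"
  shows "a = b"
proof -
  have ea: "a = 3 * (a div 3) + a mod 3" and eb: "b = 3 * (b div 3) + b mod 3" by simp_all
  have "\<not> a div 3 < b div 3" using ea eb assms by linarith
  moreover have "\<not> b div 3 < a div 3" using ea eb assms by linarith
  ultimately have "a div 3 = b div 3" by simp
  then show ?thesis using ea eb assms(1) by metis
qed

lemma tau_inj: assumes "j < n" "k < n" "tau n t j = tau n t k" shows "j = k"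
  using tau_inj_aux[OF tau_cases[OF assms(1), of t] tau_cases[OF assms(2), of t] assms(3) assms(1,2)] .

lemma tau_lt: "j < n \<Longrightarrow> tau n t j < n"
  unfolding tau_def by auto

lemma gf_inj: "p < n \<Longrightarrow> q < n \<Longrightarrow> gf n p t = gf n q t \<Longrightarrow> p = q"
proof (induction t)
  case 0 then show ?case by (simp add: gf_0)
next
  case (Suc t)
  then show ?case using tau_inj gf_lt gf_step by metis
qed

lemma ivt: "(\<forall>t. D t \<noteq> (0::int)) \<Longrightarrow> D 0 > 0 \<Longrightarrow> D m < 0 \<Longrightarrow> \<exists>t<m. D t > 0 \<and> D (Suc t) < 0"
proof (induction m)
  case 0 then show ?case by simp
next
  case (Suc m)
  show ?case
  proof (cases "D m < 0")
    case True then show ?thesis using Suc by (meson less_SucI)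
  next
    case False then have "D m > 0" using Suc(2) by (meson linorder_neqE_linordered_idom)
    then show ?thesis using Suc by blast
  qed
qed

lemma crossing:
  assumes "p < q" "q < n"
  shows "\<exists>t<n. gf n q t = gf n p t + 1 \<and> even (gf n p t + t) \<and> gf n p t + 1 < n"
proof -
  define D where "D t = int (gf n q t) - int (gf n p t)" for t
  have pn: "p < n" using assms by auto
  have nz: "\<forall>t. D t \<noteq> 0" unfolding D_def using gf_inj[OF pn assms(2)] assms(1) by (metis less_irrefl of_nat_eq_iff right_minus_eq)
  have "D 0 > 0" unfolding D_def using assms by (simp add: gf_0 pn)
  moreover have "D n < 0" unfolding D_def using assms by (simp add: gf_n pn)
  ultimately obtain t where t: "t < n" "D t > 0" "D (Suc t) < 0" using ivt nz by blast
  define j where "j = gf n p t"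
  define k where "k = gf n q t"
  have jn: "j < n" "k < n" using gf_lt pn assms(2) j_def k_def by auto
  have sp: "gf n p (Suc t) = tau n t j" using gf_step pn j_def by auto
  have sq: "gf n q (Suc t) = tau n t k" using gf_step assms(2) k_def by auto
  have d1: "int k - int j > 0" "int (tau n t k) - int (tau n t j) < 0"
    using t(2,3) unfolding D_def sp sq j_def k_def by auto
  from tau_cases[OF jn(1), of t] tau_cases[OF jn(2), of t] d1
  have "k = j + 1 \<and> even (j + t) \<and> j + 1 < n" by auto
  then show ?thesis using t(1) unfolding j_def k_def by auto
qed



definition disjM :: "'a set set \<Rightarrow> bool" where
  "disjM M \<longleftrightarrow> (\<forall>e1\<in>M. \<forall>e2\<in>M. e1 \<noteq> e2 \<longrightarrow> e1 \<inter> e2 = {})"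

lemma swap_in: assumes "disjM M" "{u,v} \<in> M" "u \<noteq> v" shows "swap M u = v"
proof -
  have ex: "\<exists>y. y \<noteq> u \<and> {u, y} \<in> M" using assms(2,3) by (intro exI[of _ v]) simp
  have un: "y = v" if "y \<noteq> u" "{u,y} \<in> M" for y
  proof (rule ccontr)
    assume "y \<noteq> v"
    then have "v \<notin> {u,y}" using assms(3) by simp
    then have "{u,y} \<noteq> {u,v}" by blast
    then have "{u,y} \<inter> {u,v} = {}"
      using assms(1)[unfolded disjM_def, rule_format, OF that(2) assms(2)] by simp
    then show False by simp
  qed
  have "(THE y. y \<noteq> u \<and> {u, y} \<in> M) = v"
  proof (rule the_equality)
    show "v \<noteq> u \<and> {u, v} \<in> M" using assms(2,3) by simp
    show "\<And>y. y \<noteq> u \<and> {u, y} \<in> M \<Longrightarrow> y = v" using un by blast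
  qed
  then show ?thesis using ex unfolding swap_def by simp
qed

lemma swap_out: assumes "\<forall>e\<in>M. u \<notin> e" shows "swap M u = u"
  using assms unfolding swap_def by auto

fun run :: "(nat \<Rightarrow> 'a set set) \<Rightarrow> nat \<Rightarrow> nat \<Rightarrow> 'a \<Rightarrow> 'a" where
  "run ms T 0 = id"
| "run ms T (Suc s) = swap (ms (T + s)) \<circ> run ms T s"

lemma pos_run: "pos ms (T + s) = run ms T s \<circ> pos ms T"
  by (induction s) auto

lemma run_add: "run ms T (s1 + s2) = run ms (T + s1) s2 \<circ> run ms T s1"
  by (induction s2) (auto simp: add.assoc)

definition gstep :: "'a list \<Rightarrow> nat \<Rightarrow> 'a set set" where
  "gstep P k = (if length P = 2 then (if k = 0 then {{P!0, P!1}} else {})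
    else if length P = 3 then (if k = 0 \<or> k = 2 then {{P!0, P!1}} else if k = 1 then {{P!1, P!2}} else {})
    else if length P = 4 then (if k = 0 \<or> k = 4 then {{P!0, P!1}} else if k = 1 \<or> k = 3 then {{P!1, P!2}}
         else if k = 2 then {{P!2, P!3}} else {})
    else {})"

fun gq :: "'a list \<Rightarrow> nat \<Rightarrow> 'a \<Rightarrow> 'a" where
  "gq P 0 = id"
| "gq P (Suc s) = swap (gstep P s) \<circ> gq P s"

lemma gstep_edge: "e \<in> gstep P k \<Longrightarrow> \<exists>i. Suc i < length P \<and> e = {P!i, P!Suc i}"
proof -
  assume e: "e \<in> gstep P k"
  have c: "e = {P!0, P!1} \<and> 1 < length P \<or> e = {P!1, P!2} \<and> 2 < length P \<or> e = {P!2, P!3} \<and> 3 < length P"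
    using e unfolding gstep_def by (auto split: if_splits)
  then show ?thesis
  proof (elim disjE)
    assume "e = {P!0, P!1} \<and> 1 < length P" then show ?thesis by (intro exI[of _ 0]) simp
  next
    assume "e = {P!1, P!2} \<and> 2 < length P" then show ?thesis by (intro exI[of _ 1]) (simp add: numeral_2_eq_2)
  next
    assume "e = {P!2, P!3} \<and> 3 < length P" then show ?thesis by (intro exI[of _ 2]) (simp add: numeral_3_eq_3 numeral_2_eq_2)
  qed
qed

lemma gstep_sub: "gstep P k = {} \<or> (\<exists>e. gstep P k = {e})"
  unfolding gstep_def by simp

lemma gstep_card: "e1 \<in> gstep P k \<Longrightarrow> e2 \<in> gstep P k \<Longrightarrow> e1 = e2"
  using gstep_sub[of P k] by auto

lemma swap_single: "a \<noteq> b \<Longrightarrow> swap {{a,b}} w = (if w = a then b else if w = b then a else w)"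
proof -
  assume ab: "a \<noteq> b"
  have d: "disjM {{a,b}}" unfolding disjM_def by auto
  show ?thesis
  proof (cases "w = a \<or> w = b")
    case True
    have m1: "{a,b} \<in> {{a,b}}" by blast
    have m2: "{b,a} \<in> {{a,b}}" by blast
    have 1: "swap {{a,b}} a = b" using swap_in[OF d m1] ab by blast
    have 2: "swap {{a,b}} b = a" using swap_in[OF d m2] ab by blast
    show ?thesis using True 1 2 ab by auto
  next
    case False then show ?thesis by (simp add: swap_out)
  qed
qed

lemma swap_empty: "swap {} w = w" by (simp add: swap_out)


lemma gq2: assumes "a \<noteq> b"
  shows "gq [a,b] 5 a = b \<and> gq [a,b] 5 b = a"
proof -
  let ?P = "[a,b]"
  have g: "gstep ?P 0 = {{a,b}}" "gstep ?P (Suc 0) = {}" "gstep ?P (Suc (Suc 0)) = {}"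
     "gstep ?P (Suc (Suc (Suc 0))) = {}" "gstep ?P (Suc (Suc (Suc (Suc 0)))) = {}" by (simp_all add: gstep_def)
  have s1: "\<And>w. swap {{a,b}} w = (if w = a then b else if w = b then a else w)" using swap_single assms by metis
  have e: "(5::nat) = Suc (Suc (Suc (Suc (Suc 0))))" by simp_all
  show ?thesis unfolding e using assms by (simp only: gq.simps comp_apply id_apply g s1 swap_empty if_True if_False simp_thms) (simp add: eq_commute)
qed

lemma gq3: assumes "a \<noteq> b" "a \<noteq> c" "b \<noteq> c"
  shows "gq [a,b,c] 5 a = c \<and> gq [a,b,c] 5 c = a \<and> gq [a,b,c] 5 b = b
   \<and> gq [a,b,c] 1 a = b \<and> gq [a,b,c] 1 c = c"
proof -
  let ?P = "[a,b,c]"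
  have g: "gstep ?P 0 = {{a,b}}" "gstep ?P (Suc 0) = {{b,c}}" "gstep ?P (Suc (Suc 0)) = {{a,b}}"
     "gstep ?P (Suc (Suc (Suc 0))) = {}" "gstep ?P (Suc (Suc (Suc (Suc 0)))) = {}" by (simp_all add: gstep_def)
  have s1: "\<And>w. swap {{a,b}} w = (if w = a then b else if w = b then a else w)" using swap_single assms by metis
  have s2: "\<And>w. swap {{b,c}} w = (if w = b then c else if w = c then b else w)" using swap_single assms by metis
  have e: "(5::nat) = Suc (Suc (Suc (Suc (Suc 0))))" "(1::nat) = Suc 0" by simp_all
  show ?thesis unfolding e using assms by (simp only: gq.simps comp_apply id_apply g s1 s2 swap_empty if_True if_False simp_thms) (simp add: eq_commute)
qed

lemma gq4: assumes "a \<noteq> b" "a \<noteq> c" "a \<noteq> d" "b \<noteq> c" "b \<noteq> d" "c \<noteq> d"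
  shows "gq [a,b,c,d] 5 a = d \<and> gq [a,b,c,d] 5 d = a \<and> gq [a,b,c,d] 5 b = b
   \<and> gq [a,b,c,d] 5 c = c \<and> gq [a,b,c,d] 2 a = c \<and> gq [a,b,c,d] 2 d = d"
proof -
  let ?P = "[a,b,c,d]"
  have g: "gstep ?P 0 = {{a,b}}" "gstep ?P (Suc 0) = {{b,c}}" "gstep ?P (Suc (Suc 0)) = {{c,d}}"
     "gstep ?P (Suc (Suc (Suc 0))) = {{b,c}}" "gstep ?P (Suc (Suc (Suc (Suc 0)))) = {{a,b}}" by (simp_all add: gstep_def)
  have s1: "\<And>w. swap {{a,b}} w = (if w = a then b else if w = b then a else w)" using swap_single assms by metis
  have s2: "\<And>w. swap {{b,c}} w = (if w = b then c else if w = c then b else w)" using swap_single assms by metis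
  have s3: "\<And>w. swap {{c,d}} w = (if w = c then d else if w = d then c else w)" using swap_single assms by metis
  have e: "(5::nat) = Suc (Suc (Suc (Suc (Suc 0))))" "(2::nat) = Suc (Suc 0)" by simp_all
  show ?thesis unfolding e using assms by (simp only: gq.simps comp_apply id_apply g s1 s2 s3 if_True if_False simp_thms) (simp add: eq_commute)
qed

lemma gstep_in_set: "e \<in> gstep P k \<Longrightarrow> e \<subseteq> set P"
  using gstep_edge[of e P k] by auto

lemma gstep_2: assumes "distinct P" "e \<in> gstep P k" shows "\<exists>x y. x \<noteq> y \<and> e = {x,y}"
proof -
  obtain i where "Suc i < length P" "e = {P!i, P!Suc i}" using gstep_edge[OF assms(2)] by blast
  then show ?thesis using assms(1) by (metis Suc_lessD n_not_Suc_n nth_eq_iff_index_eq)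
qed

lemma disjM_gstep: "distinct P \<Longrightarrow> disjM (gstep P k)"
  unfolding disjM_def using gstep_card by blast

lemma swap_gstep_set: assumes "distinct P" "w \<in> set P" shows "swap (gstep P k) w \<in> set P"
proof (cases "\<exists>z. z \<noteq> w \<and> {w,z} \<in> gstep P k")
  case True
  then obtain z where z: "z \<noteq> w" "{w,z} \<in> gstep P k" by blast
  have "swap (gstep P k) w = z" using swap_in[OF disjM_gstep[OF assms(1)] z(2)] z(1) by simp
  then show ?thesis using gstep_in_set[OF z(2)] by simp
next
  case False
  then have "swap (gstep P k) w = w" unfolding swap_def by metis
  then show ?thesis using assms by simp
qed

lemma swap_gstep_out: "w \<notin> set P \<Longrightarrow> swap (gstep P k) w = w"
  using gstep_in_set by (metis subsetD swap_out)

lemma gq_set: "distinct P \<Longrightarrow> w \<in> set P \<Longrightarrow> gq P s w \<in> set P"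
  by (induction s) (auto simp: swap_gstep_set)

lemma gq_out: "w \<notin> set P \<Longrightarrow> gq P s w = w"
  by (induction s) (auto simp: swap_gstep_out)

lemma gadget:
  assumes "distinct P" "2 \<le> length P" "length P \<le> 4"
  shows "gq P 5 (hd P) = last P \<and> gq P 5 (last P) = hd P \<and>
    (\<forall>w. w \<noteq> hd P \<longrightarrow> w \<noteq> last P \<longrightarrow> gq P 5 w = w) \<and>
    (\<exists>s<5. \<exists>i. Suc i < length P \<and> gq P s (hd P) = P!i \<and> gq P s (last P) = P!Suc i)"
proof -
  have "length P = 2 \<or> length P = 3 \<or> length P = 4" using assms by auto
  then show ?thesis
  proof (elim disjE)
    assume l: "length P = 2"
    then obtain a b where P: "P = [a,b]"
      by (auto simp: length_Suc_conv numeral_eq_Suc)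
    have ab: "a \<noteq> b" using assms(1) P by simp
    have g: "gq P 5 a = b" "gq P 5 b = a" using gq2[OF ab] P by simp_all
    have o: "gq P 5 w = w" if "w \<noteq> a" "w \<noteq> b" for w using gq_out[of w P 5] that P by simp
    have ex: "\<exists>s<5. \<exists>i. Suc i < length P \<and> gq P s (hd P) = P!i \<and> gq P s (last P) = P!Suc i"
      by (rule exI[of _ 0]) (use P in auto)
    have hl: "hd P = a" "last P = b" using P by simp_all
    show ?thesis using g o ex unfolding hl by (simp del: gq.simps)
  next
    assume l: "length P = 3"
    then obtain a b c where P: "P = [a,b,c]"
      by (auto simp: length_Suc_conv numeral_eq_Suc)
    have d: "a \<noteq> b" "a \<noteq> c" "b \<noteq> c" using assms(1) P by auto
    have g: "gq P 5 a = c" "gq P 5 c = a" "gq P 5 b = b" "gq P 1 a = b" "gq P 1 c = c" using gq3[OF d] P by simp_all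
    have o: "gq P 5 w = w" if "w \<noteq> a" "w \<noteq> b" "w \<noteq> c" for w using gq_out[of w P 5] that P by simp
    have x: "Suc 1 < length P \<and> gq P 1 (hd P) = P!1 \<and> gq P 1 (last P) = P!Suc 1" using g P by (simp del: gq.simps)
    have ex: "\<exists>s<5. \<exists>i. Suc i < length P \<and> gq P s (hd P) = P!i \<and> gq P s (last P) = P!Suc i"
    proof (rule exI[of _ 1], rule conjI)
      show "(1::nat) < 5" by simp
      show "\<exists>i. Suc i < length P \<and> gq P 1 (hd P) = P!i \<and> gq P 1 (last P) = P!Suc i" using x by blast
    qed
    have hl: "hd P = a" "last P = c" using P by simp_all
    have o2: "\<forall>w. w \<noteq> a \<longrightarrow> w \<noteq> c \<longrightarrow> gq P 5 w = w"
    proof (intro allI impI)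
      fix w assume "w \<noteq> a" "w \<noteq> c" then show "gq P 5 w = w" using o g(3) by (cases "w = b") simp_all
    qed
    show ?thesis using g o2 ex unfolding hl by (simp del: gq.simps)
  next
    assume l: "length P = 4"
    then obtain a b c d where P: "P = [a,b,c,d]"
      by (auto simp: length_Suc_conv numeral_eq_Suc)
    have dd: "a \<noteq> b" "a \<noteq> c" "a \<noteq> d" "b \<noteq> c" "b \<noteq> d" "c \<noteq> d" using assms(1) P by auto
    have g: "gq P 5 a = d" "gq P 5 d = a" "gq P 5 b = b" "gq P 5 c = c" "gq P 2 a = c" "gq P 2 d = d"
      using gq4[OF dd] P by simp_all
    have o: "gq P 5 w = w" if "w \<noteq> a" "w \<noteq> b" "w \<noteq> c" "w \<noteq> d" for w using gq_out[of w P 5] that P by simp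
    have x: "Suc 2 < length P \<and> gq P 2 (hd P) = P!2 \<and> gq P 2 (last P) = P!Suc 2" using g P by (simp del: gq.simps)
    have ex: "\<exists>s<5. \<exists>i. Suc i < length P \<and> gq P s (hd P) = P!i \<and> gq P s (last P) = P!Suc i"
    proof (rule exI[of _ 2], rule conjI)
      show "(2::nat) < 5" by simp
      show "\<exists>i. Suc i < length P \<and> gq P 2 (hd P) = P!i \<and> gq P 2 (last P) = P!Suc i" using x by blast
    qed
    have hl: "hd P = a" "last P = d" using P by simp_all
    have o2: "\<forall>w. w \<noteq> a \<longrightarrow> w \<noteq> d \<longrightarrow> gq P 5 w = w"
    proof (intro allI impI)
      fix w assume "w \<noteq> a" "w \<noteq> d" then show "gq P 5 w = w" using o g(3,4) by (cases "w = b"; cases "w = c") simp_all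
    qed
    show ?thesis using g o2 ex unfolding hl by (simp del: gq.simps)
  qed
qed



fun Hf :: "('a \<Rightarrow> 'a list) \<Rightarrow> nat \<Rightarrow> 'a \<Rightarrow> 'a list" where
  "Hf ch 0 x = [x]"
| "Hf ch (Suc f) x = x # concat (map (\<lambda>c. rev (Hf ch f c)) (ch x))"

locale tgraph =
  fixes V :: "'a set" and E :: "'a \<Rightarrow> 'a \<Rightarrow> bool" and r :: 'a
  assumes fg: "fin_graph V E" and cg: "connected_graph V E" and rV: "r \<in> V"
begin

lemma finV: "finite V" using fg unfolding fin_graph_def by blast
lemma EV: "E u v \<Longrightarrow> u \<in> V \<and> v \<in> V" using fg unfolding fin_graph_def by blast
lemma Esym: "E u v \<Longrightarrow> E v u" using fg unfolding fin_graph_def by blast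
lemma Eirr: "\<not> E u u" using fg unfolding fin_graph_def by blast

definition dep :: "'a \<Rightarrow> nat" where "dep v = (LEAST k. (E ^^ k) r v)"

lemma dep_ok: assumes "v \<in> V" shows "(E ^^ dep v) r v"
proof -
  have "E\<^sup>*\<^sup>* r v" using cg rV assms unfolding connected_graph_def by blast
  then obtain k where "(E ^^ k) r v" using rtranclp_power by metis
  then show ?thesis unfolding dep_def by (rule LeastI)
qed

lemma dep_min: "(E ^^ k) r v \<Longrightarrow> dep v \<le> k"
  unfolding dep_def by (rule Least_le)

lemma dep_r: "dep r = 0"
  using dep_min[of 0 r] by simp

lemma dep_0: assumes "v \<in> V" "dep v = 0" shows "v = r"
  using dep_ok[OF assms(1)] assms(2) by simp

lemma dep_edge: assumes "u \<in> V" "E u v" shows "dep v \<le> Suc (dep u)"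
  using dep_min[OF relpowp_Suc_I[OF dep_ok[OF assms(1)] assms(2)]] .

definition par :: "'a \<Rightarrow> 'a" where "par v = (SOME u. E u v \<and> Suc (dep u) = dep v)"

lemma par_ok: assumes "v \<in> V" "v \<noteq> r" shows "E (par v) v \<and> Suc (dep (par v)) = dep v"
proof -
  have "dep v \<noteq> 0" using dep_0 assms by blast
  then obtain k where k: "dep v = Suc k" using not0_implies_Suc by blast
  have "(E ^^ Suc k) r v" using dep_ok[OF assms(1)] k by simp
  then obtain y where y: "(E ^^ k) r y" "E y v" by (rule relpowp_Suc_E)
  have "dep y \<le> k" using dep_min[OF y(1)] .
  moreover have "dep v \<le> Suc (dep y)" using dep_edge[OF _ y(2)] EV[OF y(2)] by blast
  ultimately have "E y v \<and> Suc (dep y) = dep v" using k y(2) by simp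
  then show ?thesis unfolding par_def by (rule someI)
qed

lemma par_V: "v \<in> V \<Longrightarrow> v \<noteq> r \<Longrightarrow> par v \<in> V"
  using par_ok EV by blast

lemma par_iter: assumes "w \<in> V" "m \<le> dep w" shows "(par ^^ m) w \<in> V \<and> dep ((par ^^ m) w) = dep w - m"
  using assms(2)
proof (induction m)
  case 0 then show ?case using assms(1) by simp
next
  case (Suc m)
  then have IH: "(par ^^ m) w \<in> V" "dep ((par ^^ m) w) = dep w - m" by auto
  have ne: "(par ^^ m) w \<noteq> r" using IH(2) Suc.prems dep_r by auto
  have "Suc (dep (par ((par ^^ m) w))) = dep w - m" using par_ok[OF IH(1) ne] IH(2) by simp
  then have "dep (par ((par ^^ m) w)) = dep w - Suc m" by arith
  then show ?case using par_V[OF IH(1) ne] by simp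
qed

definition children :: "'a \<Rightarrow> 'a set" where "children x = {v \<in> V. v \<noteq> r \<and> par v = x}"

lemma children_fin: "finite (children x)" using finV unfolding children_def by simp

definition chl :: "'a \<Rightarrow> 'a list" where "chl x = (SOME xs. distinct xs \<and> set xs = children x)"

lemma chl_ok: "distinct (chl x) \<and> set (chl x) = children x"
proof -
  obtain xs where "set xs = children x" "distinct xs" using finite_distinct_list[OF children_fin] by blast
  then have "\<exists>xs. distinct xs \<and> set xs = children x" by blast
  then show ?thesis unfolding chl_def by (rule someI_ex)
qed

lemma child_props: assumes "c \<in> children x"
  shows "c \<in> V \<and> c \<noteq> r \<and> par c = x \<and> dep c = Suc (dep x) \<and> E x c \<and> x \<in> V"
  using assms par_ok[of c] par_V[of c] unfolding children_def by auto

lemma chl_props: "c \<in> set (chl x) \<Longrightarrow> c \<in> V \<and> c \<noteq> r \<and> par c = x \<and> dep c = Suc (dep x) \<and> E x c \<and> x \<in> V"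
  using chl_ok child_props by blast

lemma chl_len: "length (chl x) \<le> degree V E x"
proof -
  have "length (chl x) = card (children x)" using chl_ok distinct_card by metis
  also have "\<dots> \<le> card {w \<in> V. E x w}"
    by (rule card_mono) (use finV child_props in auto)
  finally show ?thesis unfolding degree_def .
qed

lemma deg_le: "x \<in> V \<Longrightarrow> degree V E x \<le> max_degree V E"
  unfolding max_degree_def using finV by simp

definition maxd :: nat where "maxd = Max (dep ` V)"

lemma dep_le_maxd: "v \<in> V \<Longrightarrow> dep v \<le> maxd"
  unfolding maxd_def using finV by simp

definition H :: "'a \<Rightarrow> 'a list" where "H x = Hf chl (maxd - dep x) x"

lemma H_unfold: assumes "x \<in> V" shows "H x = x # concat (map (\<lambda>c. rev (H c)) (chl x))"
proof (cases "dep x < maxd")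
  case True
  then obtain f where f: "maxd - dep x = Suc f" by (metis zero_less_diff not0_implies_Suc neq0_conv)
  have "\<And>c. c \<in> set (chl x) \<Longrightarrow> maxd - dep c = f" using chl_props f by fastforce
  then have "map (\<lambda>c. rev (Hf chl f c)) (chl x) = map (\<lambda>c. rev (H c)) (chl x)"
    by (intro map_cong) (simp_all add: H_def)
  then show ?thesis unfolding H_def f by (metis Hf.simps(2))
next
  case False
  have "chl x = []"
  proof (rule ccontr)
    assume "chl x \<noteq> []"
    then obtain c where "c \<in> set (chl x)" by (cases "chl x") auto
    then have "c \<in> V" "dep c = Suc (dep x)" using chl_props by auto
    then show False using dep_le_maxd False by fastforce
  qed
  moreover have "maxd - dep x = 0" using False by simp
  ultimately show ?thesis unfolding H_def by simp
qed

lemma V_induct[consumes 1, case_names step]: assumes "x \<in> V" "\<And>x. x \<in> V \<Longrightarrow> (\<And>c. c \<in> set (chl x) \<Longrightarrow> P c) \<Longrightarrow> P x"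
  shows "P x"
proof -
  have "\<forall>x. x \<in> V \<longrightarrow> maxd - dep x = k \<longrightarrow> P x" for k
  proof (induction k rule: less_induct)
    case (less k)
    show ?case
    proof (intro allI impI)
      fix x assume x: "x \<in> V" "maxd - dep x = k"
      show "P x"
      proof (rule assms(2)[OF x(1)])
        fix c assume c: "c \<in> set (chl x)"
        then have "c \<in> V" "dep c = Suc (dep x)" using chl_props by auto
        moreover then have "maxd - dep c < k" using dep_le_maxd x by fastforce
        ultimately show "P c" using less by blast
      qed
    qed
  qed
  then show ?thesis using assms(1) by blast
qed

definition desc :: "'a \<Rightarrow> 'a set" where
  "desc x = {w \<in> V. dep x \<le> dep w \<and> (par ^^ (dep w - dep x)) w = x}"

lemma H_set: assumes "x \<in> V" shows "set (H x) = desc x"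
  using assms
proof (induction x rule: V_induct)
  case (step x)
  have s: "set (H x) = insert x (\<Union>c\<in>set (chl x). desc c)"
    using H_unfold[OF step(1)] step(2) chl_props by auto
  show ?case unfolding s
  proof
    show "insert x (\<Union>c\<in>set (chl x). desc c) \<subseteq> desc x"
    proof
      fix w assume "w \<in> insert x (\<Union>c\<in>set (chl x). desc c)"
      then show "w \<in> desc x"
      proof
        assume "w = x" then show ?thesis using step(1) unfolding desc_def by simp
      next
        assume "w \<in> (\<Union>c\<in>set (chl x). desc c)"
        then obtain c where c: "c \<in> set (chl x)" "w \<in> desc c" by blast
        have cp: "dep c = Suc (dep x)" "par c = x" using chl_props[OF c(1)] by auto
        have w: "w \<in> V" "dep c \<le> dep w" "(par ^^ (dep w - dep c)) w = c" using c(2) unfolding desc_def by auto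
        have e: "dep w - dep x = Suc (dep w - dep c)" using w(2) cp by simp
        have "(par ^^ (dep w - dep x)) w = x" unfolding e using w(3) cp(2) by simp
        then show ?thesis using w cp unfolding desc_def by simp
      qed
    qed
  next
    show "desc x \<subseteq> insert x (\<Union>c\<in>set (chl x). desc c)"
    proof
      fix w assume w: "w \<in> desc x"
      then have w1: "w \<in> V" "dep x \<le> dep w" "(par ^^ (dep w - dep x)) w = x" unfolding desc_def by auto
      show "w \<in> insert x (\<Union>c\<in>set (chl x). desc c)"
      proof (cases "dep w = dep x")
        case True then show ?thesis using w1 by simp
      next
        case False
        define m where "m = dep w - dep x - 1"
        define c where "c = (par ^^ m) w"
        have m: "m \<le> dep w" "dep w - dep x = Suc m" using False w1(2) unfolding m_def by auto
        have cV: "c \<in> V" "dep c = dep w - m" using par_iter[OF w1(1) m(1)] c_def by auto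
        have cr: "c \<noteq> r" using cV(2) m(2) dep_r by auto
        have pc: "par c = x" using w1(3) unfolding m(2) c_def by simp
        have "c \<in> children x" unfolding children_def using cV cr pc by simp
        then have c1: "c \<in> set (chl x)" using chl_ok by blast
        have "dep w - dep c = m" using cV(2) m by simp
        then have "w \<in> desc c" unfolding desc_def using w1(1) cV(2) c_def by simp
        then show ?thesis using c1 by blast
      qed
    qed
  qed
qed

lemma desc_dep: "w \<in> desc x \<Longrightarrow> dep x \<le> dep w" unfolding desc_def by simp

lemma desc_disj: assumes "dep c = dep c'" "c \<noteq> c'" shows "desc c \<inter> desc c' = {}"
  using assms unfolding desc_def by auto

lemma distinct_concat_map:
  assumes "distinct cs" "\<And>c. c \<in> set cs \<Longrightarrow> distinct (f c)"
    "\<And>c c'. c \<in> set cs \<Longrightarrow> c' \<in> set cs \<Longrightarrow> c \<noteq> c' \<Longrightarrow> set (f c) \<inter> set (f c') = {}"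
  shows "distinct (concat (map f cs))"
  using assms
proof (induction cs)
  case Nil then show ?case by simp
next
  case (Cons a cs)
  have "distinct (concat (map f cs))" using Cons by simp
  moreover have "set (f a) \<inter> set (concat (map f cs)) = {}" using Cons.prems by auto
  ultimately show ?case using Cons.prems by simp
qed

lemma H_distinct: assumes "x \<in> V" shows "distinct (H x)"
  using assms
proof (induction x rule: V_induct)
  case (step x)
  have d1: "distinct (concat (map (\<lambda>c. rev (H c)) (chl x)))"
  proof (rule distinct_concat_map)
    show "distinct (chl x)" using chl_ok by blast
    show "\<And>c. c \<in> set (chl x) \<Longrightarrow> distinct (rev (H c))" using step by simp
    fix c c' assume c: "c \<in> set (chl x)" "c' \<in> set (chl x)" "c \<noteq> c'"
    have "dep c = dep c'" "c \<in> V" "c' \<in> V" using chl_props c by auto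
    then show "set (rev (H c)) \<inter> set (rev (H c')) = {}" using desc_disj H_set c(3) by simp
  qed
  have "x \<notin> set (concat (map (\<lambda>c. rev (H c)) (chl x)))"
  proof
    assume "x \<in> set (concat (map (\<lambda>c. rev (H c)) (chl x)))"
    then obtain c where c: "c \<in> set (chl x)" "x \<in> set (H c)" by auto
    then have "dep c \<le> dep x" using H_set desc_dep chl_props by blast
    then show False using chl_props[OF c(1)] by simp
  qed
  then show ?case using d1 H_unfold[OF step(1)] by simp
qed

lemma H_hd: "x \<in> V \<Longrightarrow> hd (H x) = x" using H_unfold by simp
lemma H_ne: "x \<in> V \<Longrightarrow> H x \<noteq> []" using H_unfold by simp

definition L :: "'a \<Rightarrow> 'a" where "L x = (if chl x = [] then x else last (chl x))"

lemma H_last: assumes "x \<in> V" shows "last (H x) = L x"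
proof (cases "chl x = []")
  case True then show ?thesis using H_unfold[OF assms] unfolding L_def by simp
next
  case False
  then obtain cs c where cs: "chl x = cs @ [c]" by (metis rev_exhaust)
  have cV: "c \<in> V" using chl_props[of c x] cs by simp
  have "last (H x) = last (rev (H c))" using H_unfold[OF assms] cs H_ne[OF cV] by simp
  also have "\<dots> = c" using H_hd[OF cV] H_ne[OF cV] by (simp add: last_rev)
  finally show ?thesis unfolding L_def using cs by simp
qed

end


definition cons :: "'a list \<Rightarrow> 'a \<Rightarrow> 'a \<Rightarrow> bool" where
  "cons xs a b \<longleftrightarrow> (\<exists>us vs. xs = us @ a # b # vs)"

lemma cons_nth: "cons xs a b \<longleftrightarrow> (\<exists>j. Suc j < length xs \<and> xs!j = a \<and> xs!Suc j = b)"
proof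
  assume "cons xs a b"
  then obtain us vs where "xs = us @ a # b # vs" unfolding cons_def by blast
  then show "\<exists>j. Suc j < length xs \<and> xs!j = a \<and> xs!Suc j = b"
    by (intro exI[of _ "length us"]) (simp add: nth_append)
next
  assume "\<exists>j. Suc j < length xs \<and> xs!j = a \<and> xs!Suc j = b"
  then obtain j where j: "Suc j < length xs" "xs!j = a" "xs!Suc j = b" by blast
  have "xs = take j xs @ xs!j # xs!Suc j # drop (Suc (Suc j)) xs"
    using j(1) by (metis Cons_nth_drop_Suc Suc_lessD append_take_drop_id)
  then show "cons xs a b" unfolding cons_def using j by metis
qed

lemma cons_Cons: "cons (x # xs) a b \<longleftrightarrow> (xs \<noteq> [] \<and> a = x \<and> b = hd xs) \<or> cons xs a b"
proof
  assume "cons (x # xs) a b"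
  then obtain us vs where u: "x # xs = us @ a # b # vs" unfolding cons_def by blast
  show "(xs \<noteq> [] \<and> a = x \<and> b = hd xs) \<or> cons xs a b"
  proof (cases us)
    case Nil then show ?thesis using u by auto
  next
    case (Cons u us') then show ?thesis using u unfolding cons_def by auto
  qed
next
  assume "(xs \<noteq> [] \<and> a = x \<and> b = hd xs) \<or> cons xs a b"
  then show "cons (x # xs) a b"
  proof
    assume h: "xs \<noteq> [] \<and> a = x \<and> b = hd xs"
    then have "x # xs = [] @ a # b # tl xs" by simp
    then show ?thesis unfolding cons_def by blast
  next
    assume "cons xs a b"
    then obtain us vs where "xs = us @ a # b # vs" unfolding cons_def by blast
    then have "x # xs = (x # us) @ a # b # vs" by simp
    then show ?thesis unfolding cons_def by blast
  qed
qed

lemma cons_append: "cons (xs @ ys) a b \<Longrightarrow> cons xs a b \<or> cons ys a b \<or> (xs \<noteq> [] \<and> ys \<noteq> [] \<and> a = last xs \<and> b = hd ys)"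
proof (induction xs)
  case Nil then show ?case by simp
next
  case (Cons x xs)
  have "(xs @ ys \<noteq> [] \<and> a = x \<and> b = hd (xs @ ys)) \<or> cons (xs @ ys) a b"
    using Cons.prems cons_Cons[of x "xs @ ys"] by simp
  then show ?case
  proof
    assume h: "xs @ ys \<noteq> [] \<and> a = x \<and> b = hd (xs @ ys)"
    show ?case
    proof (cases xs)
      case Nil then show ?thesis using h by simp
    next
      case (Cons y ys') then show ?thesis using h cons_Cons[of x xs] by simp
    qed
  next
    assume "cons (xs @ ys) a b"
    then have "cons xs a b \<or> cons ys a b \<or> (xs \<noteq> [] \<and> ys \<noteq> [] \<and> a = last xs \<and> b = hd ys)" using Cons.IH by blast
    then show ?case using cons_Cons[of x xs] by auto
  qed
qed

lemma cons_rev: "cons (rev xs) a b \<longleftrightarrow> cons xs b a"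
proof -
  have "cons (rev xs) a b \<Longrightarrow> cons xs b a" for xs :: "'a list" and a b
  proof -
    assume "cons (rev xs) a b"
    then obtain us vs where "rev xs = us @ a # b # vs" unfolding cons_def by blast
    then have "xs = rev vs @ b # a # rev us" by (metis append.assoc append_Cons append_Nil rev.simps(2) rev_append rev_rev_ident)
    then show ?thesis unfolding cons_def by blast
  qed
  from this[of xs a b] this[of "rev xs" b a] show ?thesis by auto
qed

lemma cons_concat_map:
  assumes "\<And>c. c \<in> set cs \<Longrightarrow> f c \<noteq> []" "cons (concat (map f cs)) a b"
  shows "(\<exists>c\<in>set cs. cons (f c) a b) \<or> (\<exists>i. Suc i < length cs \<and> a = last (f (cs!i)) \<and> b = hd (f (cs!Suc i)))"
  using assms
proof (induction cs)
  case Nil then show ?case by (simp add: cons_def)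
next
  case (Cons c cs)
  from Cons.prems(2) have "cons (f c @ concat (map f cs)) a b" by simp
  from cons_append[OF this] have "cons (f c) a b \<or> cons (concat (map f cs)) a b \<or>
     (f c \<noteq> [] \<and> concat (map f cs) \<noteq> [] \<and> a = last (f c) \<and> b = hd (concat (map f cs)))" .
  then show ?case
  proof (elim disjE)
    assume "cons (f c) a b" then show ?case by simp
  next
    assume "cons (concat (map f cs)) a b"
    then have "(\<exists>c\<in>set cs. cons (f c) a b) \<or> (\<exists>i. Suc i < length cs \<and> a = last (f (cs!i)) \<and> b = hd (f (cs!Suc i)))"
      using Cons.IH Cons.prems(1) by simp
    then show ?case
    proof
      assume "\<exists>i. Suc i < length cs \<and> a = last (f (cs!i)) \<and> b = hd (f (cs!Suc i))"
      then obtain i where "Suc i < length cs \<and> a = last (f (cs!i)) \<and> b = hd (f (cs!Suc i))" by blast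
      then show ?case by (intro disjI2 exI[of _ "Suc i"]) simp
    qed simp
  next
    assume h: "f c \<noteq> [] \<and> concat (map f cs) \<noteq> [] \<and> a = last (f c) \<and> b = hd (concat (map f cs))"
    then obtain c' cs' where cs: "cs = c' # cs'" by (cases cs) auto
    have "b = hd (f c')" using h cs Cons.prems(1) by simp
    then show ?case using h cs by (intro disjI2 exI[of _ 0]) simp
  qed
qed

context tgraph
begin

definition gpath :: "'a \<Rightarrow> nat \<Rightarrow> 'a list" where
  "gpath y i = (if i = 0 then [y] else [chl y ! (i - 1), y]) @
      (chl y ! i # (if chl (chl y ! i) = [] then [] else [last (chl (chl y ! i))]))"

lemma gpath_hd: "hd (gpath y i) = (if i = 0 then y else chl y ! (i - 1))"
  unfolding gpath_def by simp

lemma gpath_last: "last (gpath y i) = L (chl y ! i)"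
  unfolding gpath_def L_def by simp

lemma H_pairs: assumes "x \<in> V" "cons (H x) a b"
  shows "\<exists>y\<in>set (H x). \<exists>i<length (chl y). {a, b} = {hd (gpath y i), last (gpath y i)}"
  using assms
proof (induction x arbitrary: a b rule: V_induct)
  case (step x)
  let ?f = "\<lambda>c. rev (H c)"
  have hx: "set (H x) = insert x (\<Union>c\<in>set (chl x). set (H c))"
    by (subst H_unfold[OF step.hyps]) auto
  have cV: "\<And>c. c \<in> set (chl x) \<Longrightarrow> c \<in> V" using chl_props by blast
  have ne: "\<And>c. c \<in> set (chl x) \<Longrightarrow> ?f c \<noteq> []" using H_ne cV by simp
  have "(concat (map ?f (chl x)) \<noteq> [] \<and> a = x \<and> b = hd (concat (map ?f (chl x)))) \<or> cons (concat (map ?f (chl x))) a b"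
    using step.prems(1) unfolding H_unfold[OF step.hyps] cons_Cons .
  then show ?case
  proof
    assume h: "concat (map ?f (chl x)) \<noteq> [] \<and> a = x \<and> b = hd (concat (map ?f (chl x)))"
    then obtain c cs where cs: "chl x = c # cs" by (cases "chl x") auto
    have c: "c \<in> V" using cV cs by simp
    have "b = hd (rev (H c))" using h cs ne by simp
    also have "\<dots> = L c" using H_last[OF c] H_ne[OF c] by (simp add: hd_rev)
    finally have "{a, b} = {hd (gpath x 0), last (gpath x 0)}" using h cs unfolding gpath_hd gpath_last by simp
    moreover have "x \<in> set (H x)" using hx by simp
    ultimately show ?thesis using cs by (intro bexI[of _ x] exI[of _ 0]) auto
  next
    assume "cons (concat (map ?f (chl x))) a b"
    from cons_concat_map[of "chl x" ?f, OF ne this] have "(\<exists>c\<in>set (chl x). cons (?f c) a b) \<or>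
        (\<exists>i. Suc i < length (chl x) \<and> a = last (?f (chl x!i)) \<and> b = hd (?f (chl x!Suc i)))" .
    then show ?thesis
    proof
      assume "\<exists>c\<in>set (chl x). cons (?f c) a b"
      then obtain c where c0: "c \<in> set (chl x)" "cons (rev (H c)) a b" by blast
      then have c: "c \<in> set (chl x)" "cons (H c) b a" using cons_rev[of "H c" a b] by blast+
      obtain y i where y: "y \<in> set (H c)" "i < length (chl y)" "{b, a} = {hd (gpath y i), last (gpath y i)}"
        using step.IH[OF c(1) c(2)] by blast
      have "set (H c) \<subseteq> set (H x)" using hx c(1) by auto
      moreover have "{a, b} = {hd (gpath y i), last (gpath y i)}" using y(3) by blast
      ultimately show ?thesis using y(1,2) by blast
    next
      assume "\<exists>i. Suc i < length (chl x) \<and> a = last (?f (chl x!i)) \<and> b = hd (?f (chl x!Suc i))"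
      then obtain i where i: "Suc i < length (chl x)" "a = last (?f (chl x!i))" "b = hd (?f (chl x!Suc i))" by blast
      have c1: "chl x ! i \<in> V" "chl x ! Suc i \<in> V" using cV i(1) by auto
      have a: "a = chl x ! i" using i(2) H_hd[OF c1(1)] H_ne[OF c1(1)] by (simp add: last_rev)
      have b: "b = L (chl x ! Suc i)" using i(3) H_last[OF c1(2)] H_ne[OF c1(2)] by (simp add: hd_rev)
      have "{a, b} = {hd (gpath x (Suc i)), last (gpath x (Suc i))}" unfolding gpath_hd gpath_last a b by simp
      moreover have "x \<in> set (H x)" using hx by simp
      ultimately show ?thesis using i(1) by blast
    qed
  qed
qed

lemma gpath_props:
  assumes y: "y \<in> V" and i: "i < length (chl y)"
  shows "distinct (gpath y i) \<and> 2 \<le> length (gpath y i) \<and> length (gpath y i) \<le> 4 \<and>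
    (\<forall>k. Suc k < length (gpath y i) \<longrightarrow> E (gpath y i ! k) (gpath y i ! Suc k)) \<and>
    (\<forall>w\<in>set (gpath y i). w \<in> V \<and> dep y \<le> dep w \<and> dep w \<le> dep y + 2 \<and> (par ^^ (dep w - dep y)) w = y)"
proof -
  define c where "c = chl y ! i"
  have c: "c \<in> set (chl y)" using i c_def by simp
  have cp: "c \<in> V" "par c = y" "dep c = Suc (dep y)" "E y c" using chl_props[OF c] by auto
  define A where "A = (if i = 0 then [y] else [chl y ! (i - 1), y])"
  define B where "B = (if chl c = [] then [] else [last (chl c)])"
  have gp: "gpath y i = A @ c # B" unfolding gpath_def A_def B_def c_def by simp
  have Aok: "distinct (A @ [c]) \<and> (\<forall>k. Suc k < length (A @ [c]) \<longrightarrow> E ((A @ [c]) ! k) ((A @ [c]) ! Suc k)) \<and>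
     (\<forall>w\<in>set (A @ [c]). w \<in> V \<and> dep y \<le> dep w \<and> dep w \<le> dep y + 2 \<and> (par ^^ (dep w - dep y)) w = y)
     \<and> 1 \<le> length A \<and> length A \<le> 2 \<and> last (A @ [c]) = c \<and> (\<forall>w\<in>set (A @ [c]). dep w \<le> Suc (dep y))"
  proof (cases "i = 0")
    case True
    then have A: "A = [y]" unfolding A_def by simp
    have "y \<noteq> c" using cp by auto
    then show ?thesis unfolding A using cp y by (auto simp: nth_Cons')
  next
    case False
    define c' where "c' = chl y ! (i - 1)"
    then have A: "A = [c', y]" unfolding A_def using False by simp
    have c'1: "c' \<in> set (chl y)" using i c'_def by simp
    have cp': "c' \<in> V" "par c' = y" "dep c' = Suc (dep y)" "E y c'" using chl_props[OF c'1] by auto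
    have "c' \<noteq> c" using chl_ok i False unfolding c_def c'_def by (simp add: nth_eq_iff_index_eq)
    moreover have "E c' y" using Esym cp' by blast
    moreover have "(par ^^ 1) c' = y" "(par ^^ 1) c = y" using cp cp' by simp_all
    ultimately show ?thesis unfolding A using cp cp' y by (auto simp: nth_Cons' less_Suc_eq)
  qed
  show ?thesis
  proof (cases "chl c = []")
    case True
    then have "gpath y i = A @ [c]" unfolding gp B_def by simp
    then show ?thesis using Aok by simp
  next
    case False
    define g where "g = last (chl c)"
    have g1: "g \<in> set (chl c)" using False g_def by simp
    have gp': "g \<in> V" "par g = c" "dep g = Suc (dep c)" "E c g" using chl_props[OF g1] by auto
    have gpath: "gpath y i = (A @ [c]) @ [g]" unfolding gp B_def g_def using False by simp
    have gy: "(par ^^ 2) g = y" using gp' cp by (simp add: numeral_2_eq_2)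
    have gnot: "g \<notin> set (A @ [c])"
    proof
      assume "g \<in> set (A @ [c])"
      then have "dep g \<le> Suc (dep y)" using Aok by blast
      then show False using gp' cp by simp
    qed
    have E': "\<forall>k. Suc k < length (gpath y i) \<longrightarrow> E (gpath y i ! k) (gpath y i ! Suc k)"
    proof (intro allI impI)
      fix k assume k: "Suc k < length (gpath y i)"
      show "E (gpath y i ! k) (gpath y i ! Suc k)"
      proof (cases "Suc k < length (A @ [c])")
        case True
        have "gpath y i ! k = (A @ [c]) ! k" "gpath y i ! Suc k = (A @ [c]) ! Suc k"
          unfolding gpath using True by (simp_all only: nth_append_left Suc_lessD)
        then show ?thesis using Aok True by simp
      next
        case False
        then have "Suc k = length (A @ [c])" using k unfolding gpath by simp
        then have "gpath y i ! k = last (A @ [c])" "gpath y i ! Suc k = g" unfolding gpath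
          by (simp_all add: nth_append last_conv_nth)
        then show ?thesis using Aok gp' by simp
      qed
    qed
    show ?thesis using Aok gp' gy gnot E' cp unfolding gpath by (auto simp: numeral_2_eq_2)
  qed
qed

end


context tgraph
begin

definition D :: nat where "D = max_degree V E"
definition R :: nat where "R = 15 * D"
definition n :: nat where "n = card V"
definition HR :: "'a list" where "HR = H r"
definition vv :: "nat \<Rightarrow> 'a" where "vv j = HR ! j"

lemma desc_r: "desc r = V"
proof
  show "desc r \<subseteq> V" unfolding desc_def by auto
  show "V \<subseteq> desc r"
  proof
    fix w assume w: "w \<in> V"
    have "(par ^^ dep w) w \<in> V" "dep ((par ^^ dep w) w) = 0" using par_iter[OF w, of "dep w"] by auto
    then have "(par ^^ dep w) w = r" using dep_0 by blast
    then show "w \<in> desc r" unfolding desc_def using w dep_r by simp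
  qed
qed

lemma HR_set: "set HR = V" unfolding HR_def using H_set[OF rV] desc_r by simp
lemma HR_distinct: "distinct HR" unfolding HR_def using H_distinct[OF rV] .
lemma HR_len: "length HR = n" unfolding n_def using distinct_card[OF HR_distinct] HR_set by simp

lemma vv_V: assumes "j < n" shows "vv j \<in> V"
proof -
  have "j < length HR" using assms HR_len by simp
  then have "HR ! j \<in> set HR" by (rule nth_mem)
  then show ?thesis unfolding vv_def HR_set .
qed
lemma vv_inj: "j < n \<Longrightarrow> k < n \<Longrightarrow> vv j = vv k \<Longrightarrow> j = k"
  unfolding vv_def using HR_distinct HR_len by (simp add: nth_eq_iff_index_eq)
lemma vv_surj: "w \<in> V \<Longrightarrow> \<exists>j<n. vv j = w"
  unfolding vv_def using HR_set HR_len by (metis in_set_conv_nth)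

definition tsp :: "nat \<Rightarrow> 'a \<times> nat" where
  "tsp j = (SOME p. fst p \<in> V \<and> snd p < length (chl (fst p)) \<and>
     {vv j, vv (Suc j)} = {hd (gpath (fst p) (snd p)), last (gpath (fst p) (snd p))})"
definition top :: "nat \<Rightarrow> 'a" where "top j = fst (tsp j)"
definition slot :: "nat \<Rightarrow> nat" where "slot j = snd (tsp j)"
definition gp :: "nat \<Rightarrow> 'a list" where "gp j = gpath (top j) (slot j)"

lemma ts_ok: assumes "Suc j < n"
  shows "top j \<in> V \<and> slot j < length (chl (top j)) \<and> {vv j, vv (Suc j)} = {hd (gp j), last (gp j)}"
proof -
  have "cons HR (vv j) (vv (Suc j))" unfolding cons_nth vv_def using assms HR_len by auto
  then obtain y i where "y \<in> V" "i < length (chl y)" "{vv j, vv (Suc j)} = {hd (gpath y i), last (gpath y i)}"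
    using H_pairs[OF rV] H_set[OF rV] desc_r unfolding HR_def by blast
  then have "\<exists>p. fst p \<in> V \<and> snd p < length (chl (fst p)) \<and>
     {vv j, vv (Suc j)} = {hd (gpath (fst p) (snd p)), last (gpath (fst p) (snd p))}"
    by (intro exI[of _ "(y, i)"]) simp
  then have "fst (tsp j) \<in> V \<and> snd (tsp j) < length (chl (fst (tsp j))) \<and>
     {vv j, vv (Suc j)} = {hd (gpath (fst (tsp j)) (snd (tsp j))), last (gpath (fst (tsp j)) (snd (tsp j)))}"
    unfolding tsp_def by (rule someI_ex)
  then show ?thesis unfolding top_def slot_def gp_def by blast
qed

lemma gp_props: assumes "Suc j < n"
  shows "distinct (gp j) \<and> 2 \<le> length (gp j) \<and> length (gp j) \<le> 4 \<and>
    (\<forall>k. Suc k < length (gp j) \<longrightarrow> E (gp j ! k) (gp j ! Suc k)) \<and>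
    (\<forall>w\<in>set (gp j). w \<in> V \<and> dep (top j) \<le> dep w \<and> dep w \<le> dep (top j) + 2 \<and> (par ^^ (dep w - dep (top j))) w = top j)"
  unfolding gp_def using gpath_props ts_ok[OF assms] by blast

lemma slot_lt_D: assumes "Suc j < n" shows "slot j < D"
proof -
  have "slot j < length (chl (top j))" using ts_ok[OF assms] by blast
  also have "\<dots> \<le> degree V E (top j)" by (rule chl_len)
  also have "\<dots> \<le> D" unfolding D_def using deg_le ts_ok[OF assms] by blast
  finally show ?thesis .
qed

definition pidx :: "nat \<Rightarrow> nat" where "pidx j = (dep (top j) mod 3) * D + slot j"

lemma pidx_lt: "Suc j < n \<Longrightarrow> pidx j < 3 * D"
proof -
  assume a: "Suc j < n"
  have "dep (top j) mod 3 \<le> 2" by simp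
  then have h: "(dep (top j) mod 3) * D \<le> 2 * D" by (rule mult_right_mono) simp
  show ?thesis unfolding pidx_def using h slot_lt_D[OF a] by linarith
qed

lemma pidx_eq: assumes "Suc j < n" "Suc j' < n" "pidx j = pidx j'"
  shows "slot j = slot j' \<and> dep (top j) mod 3 = dep (top j') mod 3"
proof -
  have s: "slot j < D" "slot j' < D" using slot_lt_D assms by auto
  have "pidx j mod D = slot j" "pidx j' mod D = slot j'" unfolding pidx_def using s by simp_all
  moreover have "pidx j div D = dep (top j) mod 3" "pidx j' div D = dep (top j') mod 3"
    unfolding pidx_def using s by simp_all
  ultimately show ?thesis using assms(3) by metis
qed

definition JJ :: "nat \<Rightarrow> nat \<Rightarrow> nat set" where
  "JJ t m = {j. Suc j < n \<and> even (j + t) \<and> pidx j = m}"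

lemma depth_disj:
  assumes "y \<noteq> y'" "dep y mod 3 = dep y' mod 3"
    "w \<in> V" "dep y \<le> dep w" "dep w \<le> dep y + 2" "(par ^^ (dep w - dep y)) w = y"
    "dep y' \<le> dep w" "dep w \<le> dep y' + 2" "(par ^^ (dep w - dep y')) w = y'"
  shows False
proof -
  have "dep y = dep y'" using mod3_eq[OF assms(2,4,5,7,8)] .
  then show False using assms(1,6,9) by simp
qed

lemma JJ_disj: assumes "j \<in> JJ t m" "j' \<in> JJ t m" "j \<noteq> j'" shows "set (gp j) \<inter> set (gp j') = {}"
proof -
  have a: "Suc j < n" "Suc j' < n" "pidx j = pidx j'" using assms unfolding JJ_def by auto
  have pe: "slot j = slot j'" "dep (top j) mod 3 = dep (top j') mod 3" using pidx_eq[OF a] by auto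
  have "top j \<noteq> top j'"
  proof
    assume "top j = top j'"
    then have "gp j = gp j'" unfolding gp_def using pe by simp
    then have "{vv j, vv (Suc j)} = {vv j', vv (Suc j')}" using ts_ok a by simp
    then have "(vv j = vv j' \<and> vv (Suc j) = vv (Suc j')) \<or> (vv j = vv (Suc j') \<and> vv (Suc j) = vv j')"
      by (metis doubleton_eq_iff)
    then show False
    proof
      assume "vv j = vv j' \<and> vv (Suc j) = vv (Suc j')"
      then have "j = j'" using vv_inj a by (meson Suc_lessD)
      then show False using assms(3) by simp
    next
      assume h: "vv j = vv (Suc j') \<and> vv (Suc j) = vv j'"
      then have "j = Suc j'" "Suc j = j'" using vv_inj[of j "Suc j'"] vv_inj[of "Suc j" j'] a by (meson Suc_lessD)+
      then show False by simp
    qed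
  qed
  then show ?thesis
  proof -
    assume ne: "top j \<noteq> top j'"
    show ?thesis
    proof (rule ccontr)
      assume "set (gp j) \<inter> set (gp j') \<noteq> {}"
      then obtain w where w: "w \<in> set (gp j)" "w \<in> set (gp j')" by blast
      show False using depth_disj[OF ne pe(2)] gp_props[OF a(1)] gp_props[OF a(2)] w by blast
    qed
  qed
qed

definition MM :: "nat \<Rightarrow> nat \<Rightarrow> nat \<Rightarrow> 'a set set" where
  "MM t m k = (\<Union>j\<in>JJ t m. gstep (gp j) k)"

lemma MM_matching: "is_matching E (MM t m k)"
  unfolding is_matching_def
proof (intro conjI ballI impI)
  fix e assume "e \<in> MM t m k"
  then obtain j where j: "j \<in> JJ t m" "e \<in> gstep (gp j) k" unfolding MM_def by blast
  obtain i where i: "Suc i < length (gp j)" "e = {gp j ! i, gp j ! Suc i}" using gstep_edge[OF j(2)] by blast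
  have "E (gp j ! i) (gp j ! Suc i)" using gp_props i(1) j(1) unfolding JJ_def by blast
  then show "\<exists>u v. E u v \<and> e = {u, v}" using i by blast
next
  fix e1 e2 assume e: "e1 \<in> MM t m k" "e2 \<in> MM t m k" "e1 \<noteq> e2"
  then obtain j1 j2 where j: "j1 \<in> JJ t m" "e1 \<in> gstep (gp j1) k" "j2 \<in> JJ t m" "e2 \<in> gstep (gp j2) k"
    unfolding MM_def by blast
  have "j1 \<noteq> j2" using gstep_card j e(3) by blast
  then have "set (gp j1) \<inter> set (gp j2) = {}" using JJ_disj j by blast
  then show "e1 \<inter> e2 = {}" using gstep_in_set j by blast
qed

lemma matching_disjM: "is_matching E M \<Longrightarrow> disjM M"
  unfolding is_matching_def disjM_def by blast

lemma swap_MM: assumes "j \<in> JJ t m" "w \<in> set (gp j)"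
  shows "swap (MM t m k) w = swap (gstep (gp j) k) w"
proof (cases "\<exists>z. z \<noteq> w \<and> {w, z} \<in> gstep (gp j) k")
  case True
  then obtain z where z: "z \<noteq> w" "{w,z} \<in> gstep (gp j) k" by blast
  have jn: "Suc j < n" using assms(1) unfolding JJ_def by simp
  have d: "distinct (gp j)" using gp_props[OF jn] by blast
  have "{w,z} \<in> MM t m k" using z assms(1) unfolding MM_def by blast
  then have "swap (MM t m k) w = z" using swap_in[OF matching_disjM[OF MM_matching]] z(1) by blast
  moreover have "swap (gstep (gp j) k) w = z" using swap_in[OF disjM_gstep[OF d] z(2)] z(1) by blast
  ultimately show ?thesis by simp
next
  case False
  have "\<not> (\<exists>z. z \<noteq> w \<and> {w, z} \<in> MM t m k)"
  proof
    assume "\<exists>z. z \<noteq> w \<and> {w, z} \<in> MM t m k"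
    then obtain z j' where z: "z \<noteq> w" "j' \<in> JJ t m" "{w,z} \<in> gstep (gp j') k" unfolding MM_def by blast
    have "w \<in> set (gp j')" using gstep_in_set[OF z(3)] by blast
    then have "j' = j" using JJ_disj[OF z(2) assms(1)] assms(2) by blast
    then show False using False z by blast
  qed
  then have "swap (MM t m k) w = w" unfolding swap_def by auto
  moreover have "swap (gstep (gp j) k) w = w" unfolding swap_def using False by auto
  ultimately show ?thesis by simp
qed

lemma swap_MM_out: assumes "\<And>j. j \<in> JJ t m \<Longrightarrow> w \<notin> set (gp j)"
  shows "swap (MM t m k) w = w"
proof (rule swap_out, rule ballI)
  fix e assume "e \<in> MM t m k"
  then obtain j where "j \<in> JJ t m" "e \<in> gstep (gp j) k" unfolding MM_def by blast
  then show "w \<notin> e" using gstep_in_set assms by blast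
qed

end


locale tgraph2 = tgraph +
  assumes n2: "2 \<le> card V"
begin

lemma D_pos: "1 \<le> D"
proof -
  have "V - {r} \<noteq> {}"
  proof
    assume "V - {r} = {}"
    then have "V \<subseteq> {r}" by blast
    then have "card V \<le> card {r}" by (rule card_mono[rotated]) simp
    then show False using n2 by simp
  qed
  then obtain v where v: "v \<in> V" "v \<noteq> r" by blast
  have pv: "E (par v) v" "par v \<in> V" using par_ok[OF v] par_V[OF v] by auto
  have fin: "finite {w \<in> V. E (par v) w}" using finV by simp
  have "v \<in> {w \<in> V. E (par v) w}" using v pv by simp
  then have "0 < card {w \<in> V. E (par v) w}" using fin card_gt_0_iff by blast
  then have "1 \<le> degree V E (par v)" unfolding degree_def by simp
  also have "\<dots> \<le> D" unfolding D_def using deg_le pv(2) by blast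
  finally show ?thesis .
qed

definition strat :: "nat \<Rightarrow> 'a set set" where
  "strat T = MM (T div R) ((T mod R) div 5) ((T mod R) mod 5)"

lemma strat_at: assumes "m < 3 * D" "k < 5" shows "strat (t * R + 5 * m + k) = MM t m k"
proof -
  have lt: "5 * m + k < R" unfolding R_def using assms by linarith
  have "(t * R + 5 * m + k) div R = t" using lt by (simp add: add.assoc)
  moreover have "(t * R + 5 * m + k) mod R = 5 * m + k" using lt by (simp add: add.assoc)
  ultimately show ?thesis unfolding strat_def using assms(2) by simp
qed

lemma phase_run: assumes "m < 3 * D" "j \<in> JJ t m" "w \<in> set (gp j)" "s \<le> 5"
  shows "run strat (t * R + 5 * m) s w = gq (gp j) s w"
  using assms(4)
proof (induction s)
  case 0 then show ?case by simp
next
  case (Suc s)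
  have jn: "Suc j < n" using assms(2) unfolding JJ_def by simp
  have d: "distinct (gp j)" using gp_props[OF jn] by blast
  have IH: "run strat (t * R + 5 * m) s w = gq (gp j) s w" using Suc by simp
  have st: "strat (t * R + 5 * m + s) = MM t m s" using strat_at assms(1) Suc.prems by simp
  have inset: "gq (gp j) s w \<in> set (gp j)" using gq_set[OF d assms(3)] .
  show ?case using IH st swap_MM[OF assms(2) inset] by simp
qed

lemma phase_run_out: assumes "m < 3 * D" "\<And>j. j \<in> JJ t m \<Longrightarrow> w \<notin> set (gp j)" "s \<le> 5"
  shows "run strat (t * R + 5 * m) s w = w"
  using assms(3)
proof (induction s)
  case 0 then show ?case by simp
next
  case (Suc s)
  have st: "strat (t * R + 5 * m + s) = MM t m s" using strat_at assms(1) Suc.prems by simp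
  show ?case using Suc st swap_MM_out[OF assms(2)] by simp
qed

definition pp :: "nat \<Rightarrow> nat \<Rightarrow> nat \<Rightarrow> nat" where
  "pp t m q = (if even (q + t) \<and> Suc q < n \<and> pidx q = m then Suc q
      else if odd (q + t) \<and> 1 \<le> q \<and> pidx (q - 1) = m then q - 1 else q)"

lemma swap_pair: "{a, b} = {h, l} \<Longrightarrow> a \<noteq> b \<Longrightarrow> G h = l \<Longrightarrow> G l = h \<Longrightarrow> G a = b"
  by (metis doubleton_eq_iff)

lemma gp_ends: assumes "Suc j < n"
  shows "hd (gp j) \<noteq> last (gp j) \<and> vv j \<in> set (gp j) \<and> vv (Suc j) \<in> set (gp j) \<and> vv j \<noteq> vv (Suc j)"
proof -
  have g: "distinct (gp j)" "2 \<le> length (gp j)" using gp_props[OF assms] by auto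
  have "hd (gp j) \<noteq> last (gp j)"
  proof -
    obtain x y ys where "gp j = x # y # ys" using g(2) by (metis Suc_le_length_iff numeral_2_eq_2)
    then show ?thesis using g(1) by (cases ys rule: rev_cases) auto
  qed
  moreover have "gp j \<noteq> []" using g(2) by auto
  then have "hd (gp j) \<in> set (gp j)" "last (gp j) \<in> set (gp j)" by (simp_all add: hd_in_set last_in_set)
  moreover have "vv j \<noteq> vv (Suc j)" using vv_inj assms by (metis Suc_lessD n_not_Suc_n)
  ultimately have "{hd (gp j), last (gp j)} \<subseteq> set (gp j)" "hd (gp j) \<noteq> last (gp j)" "vv j \<noteq> vv (Suc j)" by auto
  moreover have eq: "{vv j, vv (Suc j)} = {hd (gp j), last (gp j)}" using ts_ok[OF assms] by blast
  have "vv j \<in> {hd (gp j), last (gp j)}" "vv (Suc j) \<in> {hd (gp j), last (gp j)}" by (subst eq[symmetric], simp)+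
  ultimately show ?thesis by blast
qed

lemma phase_perm: assumes "m < 3 * D" "q < n"
  shows "run strat (t * R + 5 * m) 5 (vv q) = vv (pp t m q)"
proof -
  consider (a) "even (q + t)" "Suc q < n" "pidx q = m"
    | (b) "odd (q + t)" "1 \<le> q" "pidx (q - 1) = m"
    | (c) "\<not> (even (q + t) \<and> Suc q < n \<and> pidx q = m)" "\<not> (odd (q + t) \<and> 1 \<le> q \<and> pidx (q - 1) = m)"
    by blast
  then show ?thesis
  proof cases
    case a
    have j: "q \<in> JJ t m" unfolding JJ_def using a by simp
    have ge: "distinct (gp q)" "2 \<le> length (gp q)" "length (gp q) \<le> 4" using gp_props[OF a(2)] by auto
    have e: "hd (gp q) \<noteq> last (gp q)" "vv q \<in> set (gp q)" "vv q \<noteq> vv (Suc q)" using gp_ends[OF a(2)] by auto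
    have "run strat (t * R + 5 * m) 5 (vv q) = gq (gp q) 5 (vv q)" using phase_run[OF assms(1) j e(2)] by simp
    also have "\<dots> = vv (Suc q)" using swap_pair[OF conjunct2[OF conjunct2[OF ts_ok[OF a(2)]]] e(3)] gadget[OF ge] by blast
    finally show ?thesis unfolding pp_def using a by simp
  next
    case b
    define j where "j = q - 1"
    have jq: "Suc j = q" using b j_def by simp
    have jn: "Suc j < n" using jq assms(2) by simp
    have j: "j \<in> JJ t m" unfolding JJ_def using b jq jn j_def by (auto simp: even_add)
    have ge: "distinct (gp j)" "2 \<le> length (gp j)" "length (gp j) \<le> 4" using gp_props[OF jn] by auto
    have e: "hd (gp j) \<noteq> last (gp j)" "vv (Suc j) \<in> set (gp j)" "vv j \<noteq> vv (Suc j)" using gp_ends[OF jn] by auto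
    have s: "{vv (Suc j), vv j} = {hd (gp j), last (gp j)}" using ts_ok[OF jn] by (simp add: insert_commute)
    have "run strat (t * R + 5 * m) 5 (vv (Suc j)) = gq (gp j) 5 (vv (Suc j))" using phase_run[OF assms(1) j e(2)] by simp
    also have "\<dots> = vv j" using swap_pair[OF s] e(3) gadget[OF ge] by metis
    finally show ?thesis unfolding pp_def using b jq j_def by simp
  next
    case c
    have "run strat (t * R + 5 * m) 5 (vv q) = vv q"
    proof (cases "\<exists>j\<in>JJ t m. vv q \<in> set (gp j)")
      case True
      then obtain j where j: "j \<in> JJ t m" "vv q \<in> set (gp j)" by blast
      have jn: "Suc j < n" "even (j + t)" "pidx j = m" using j(1) unfolding JJ_def by auto
      have ge: "distinct (gp j)" "2 \<le> length (gp j)" "length (gp j) \<le> 4" using gp_props[OF jn(1)] by auto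
      have nq1: "q \<noteq> j"
      proof
        assume "q = j" then show False using c jn by simp
      qed
      have nq2: "q \<noteq> Suc j"
      proof
        assume "q = Suc j" then show False using c jn by (simp add: even_add)
      qed
      have "vv q \<noteq> vv j" "vv q \<noteq> vv (Suc j)" using vv_inj nq1 nq2 assms(2) jn(1) by (meson Suc_lessD)+
      then have "vv q \<noteq> hd (gp j)" "vv q \<noteq> last (gp j)" using ts_ok[OF jn(1)] by (metis insertCI doubleton_eq_iff)+
      then have "gq (gp j) 5 (vv q) = vv q" using gadget[OF ge] by blast
      then show ?thesis using phase_run[OF assms(1) j(1) j(2)] by simp
    next
      case False
      then show ?thesis using phase_run_out[OF assms(1)] by blast
    qed
    moreover have "pp t m q = q" unfolding pp_def by (rule trans[OF if_not_P[OF c(1)] if_not_P[OF c(2)]])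
    ultimately show ?thesis by simp
  qed
qed


definition bl :: "nat \<Rightarrow> nat \<Rightarrow> nat \<Rightarrow> nat" where
  "bl t m q = (if even (q + t) \<and> Suc q < n \<and> pidx q < m then Suc q
      else if odd (q + t) \<and> 1 \<le> q \<and> pidx (q - 1) < m then q - 1 else q)"

lemma bl_step_aux:
  fixes f :: "nat \<Rightarrow> nat" and q t m N :: nat
  shows "(let q' = (if even (q + t) \<and> Suc q < N \<and> f q < m then Suc q
      else if odd (q + t) \<and> 1 \<le> q \<and> f (q - 1) < m then q - 1 else q) in
     (if even (q' + t) \<and> Suc q' < N \<and> f q' = m then Suc q'
      else if odd (q' + t) \<and> 1 \<le> q' \<and> f (q' - 1) = m then q' - 1 else q'))
   = (if even (q + t) \<and> Suc q < N \<and> f q < Suc m then Suc q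
      else if odd (q + t) \<and> 1 \<le> q \<and> f (q - 1) < Suc m then q - 1 else q)"
proof (cases "even (q + t)")
  case True
  then show ?thesis by (cases "Suc q < N"; cases "f q < m"; cases "f q = m") (auto simp: Let_def)
next
  case False
  then have o: "odd (q + t)" by simp
  show ?thesis
  proof (cases "1 \<le> q")
    case True
    then obtain p where p: "q = Suc p" by (cases q) auto
    have ep: "even (p + t)" using o p by simp
    show ?thesis using o ep unfolding p by (cases "f p < m"; cases "f p = m") (auto simp: Let_def)
  next
    case False then show ?thesis using o by (auto simp: Let_def)
  qed
qed

lemma bl_step: "pp t m (bl t m q) = bl t (Suc m) q"
  using bl_step_aux[of q t n pidx m] unfolding pp_def bl_def Let_def by simp

lemma bl_lt: "q < n \<Longrightarrow> bl t m q < n"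
  unfolding bl_def by auto

lemma block_run: assumes "m \<le> 3 * D" "q < n"
  shows "run strat (t * R) (5 * m) (vv q) = vv (bl t m q)"
  using assms(1)
proof (induction m)
  case 0 then show ?case unfolding bl_def by simp
next
  case (Suc m)
  have "run strat (t * R) (5 * Suc m) (vv q) = run strat (t * R + 5 * m) 5 (run strat (t * R) (5 * m) (vv q))"
    using run_add[of strat "t * R" "5 * m" 5] by (simp add: add.commute)
  also have "\<dots> = run strat (t * R + 5 * m) 5 (vv (bl t m q))" using Suc by simp
  also have "\<dots> = vv (pp t m (bl t m q))" using phase_perm Suc.prems bl_lt assms(2) by simp
  finally show ?case using bl_step by simp
qed

lemma block_full: assumes "q < n" shows "run strat (t * R) R (vv q) = vv (tau n t q)"
proof -
  have e: "5 * (3 * D) = R" unfolding R_def by simp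
  have "run strat (t * R) R (vv q) = vv (bl t (3 * D) q)" using block_run[OF order_refl assms, of t] unfolding e .
  moreover have "bl t (3 * D) q = tau n t q"
  proof -
    have a: "Suc q < n \<Longrightarrow> pidx q < 3 * D" using pidx_lt by blast
    have b: "1 \<le> q \<Longrightarrow> pidx (q - 1) < 3 * D" using pidx_lt assms by simp
    show ?thesis unfolding bl_def tau_def using a b by (auto simp: even_add)
  qed
  ultimately show ?thesis by simp
qed

lemma pos_strat: assumes "p < n" shows "pos strat (t * R) (vv p) = vv (gf n p t)"
proof (induction t)
  case 0 then show ?case using gf_0 assms by simp
next
  case (Suc t)
  have "pos strat (Suc t * R) (vv p) = run strat (t * R) R (pos strat (t * R) (vv p))"
    using pos_run[of strat "t * R" R] by (simp add: add.commute)
  also have "\<dots> = vv (tau n t (gf n p t))" using Suc block_full gf_lt assms by simp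
  finally show ?case using gf_step assms by simp
qed

lemma adjacent: assumes "Suc q < n" "even (q + t)"
  shows "\<exists>s\<le>R. E (run strat (t * R) s (vv q)) (run strat (t * R) s (vv (Suc q)))"
proof -
  define m where "m = pidx q"
  have m: "m < 3 * D" using pidx_lt assms(1) m_def by simp
  have j: "q \<in> JJ t m" unfolding JJ_def m_def using assms by simp
  have b1: "bl t m q = q" "bl t m (Suc q) = Suc q" unfolding bl_def m_def using assms by (auto simp: even_add)
  have r1: "run strat (t * R) (5 * m) (vv q) = vv q" "run strat (t * R) (5 * m) (vv (Suc q)) = vv (Suc q)"
    using block_run[of m q t] block_run[of m "Suc q" t] m assms(1) b1 by simp_all
  have ge: "distinct (gp q)" "2 \<le> length (gp q)" "length (gp q) \<le> 4"
    and Ep: "\<forall>k. Suc k < length (gp q) \<longrightarrow> E (gp q ! k) (gp q ! Suc k)" using gp_props[OF assms(1)] by auto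
  obtain s i where si: "s < 5" "Suc i < length (gp q)" "gq (gp q) s (hd (gp q)) = gp q ! i"
    "gq (gp q) s (last (gp q)) = gp q ! Suc i" using gadget[OF ge] by blast
  have e: "vv q \<in> set (gp q)" "vv (Suc q) \<in> set (gp q)" using gp_ends[OF assms(1)] by auto
  have eq: "{vv q, vv (Suc q)} = {hd (gp q), last (gp q)}" using ts_ok[OF assms(1)] by blast
  have ne: "vv q \<noteq> vv (Suc q)" using gp_ends[OF assms(1)] by blast
  have Eh: "E (gq (gp q) s (hd (gp q))) (gq (gp q) s (last (gp q)))" using si Ep by simp
  have "E (gq (gp q) s (vv q)) (gq (gp q) s (vv (Suc q)))"
  proof (cases "vv q = hd (gp q)")
    case True
    then have "vv (Suc q) = last (gp q)" using eq ne by (metis doubleton_eq_iff)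
    then show ?thesis using Eh True by simp
  next
    case False
    then have "vv q = last (gp q)" "vv (Suc q) = hd (gp q)" using eq ne by (metis doubleton_eq_iff)+
    then show ?thesis using Eh Esym by simp
  qed
  moreover have "run strat (t * R) (5 * m + s) w = gq (gp q) s w" if "w \<in> {vv q, vv (Suc q)}" for w
  proof -
    have "run strat (t * R) (5 * m + s) w = run strat (t * R + 5 * m) s (run strat (t * R) (5 * m) w)"
      using run_add[of strat "t * R" "5 * m" s] by simp
    also have "\<dots> = run strat (t * R + 5 * m) s w" using r1 that by auto
    also have "\<dots> = gq (gp q) s w" using phase_run[OF m j _] that e si(1) by auto
    finally show ?thesis .
  qed
  moreover have "5 * m + s \<le> R" unfolding R_def using m si(1) by linarith
  ultimately show ?thesis by (intro exI[of _ "5 * m + s"]) auto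
qed

lemma strategy: "is_strategy V E strat (n * R)"
  unfolding is_strategy_def
proof (intro conjI allI impI ballI)
  fix i show "is_matching E (strat i)" unfolding strat_def by (rule MM_matching)
next
  fix a b assume ab: "a \<in> V" "b \<in> V" "a \<noteq> b"
  have main: "acquainted E strat (n * R) (vv p) (vv q)" if pq: "p < q" "q < n" for p q
  proof -
    obtain t where t: "t < n" "gf n q t = gf n p t + 1" "even (gf n p t + t)" "gf n p t + 1 < n"
      using crossing[OF pq] by blast
    define j where "j = gf n p t"
    obtain s where s: "s \<le> R" "E (run strat (t * R) s (vv j)) (run strat (t * R) s (vv (Suc j)))"
      using adjacent[of j t] t unfolding j_def by auto
    have pa: "pos strat (t * R) (vv p) = vv j" "pos strat (t * R) (vv q) = vv (Suc j)"
      using pos_strat pq t(2) unfolding j_def by auto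
    have "E (pos strat (t * R + s) (vv p)) (pos strat (t * R + s) (vv q))"
      using s(2) pa pos_run[of strat "t * R" s] by simp
    moreover have "t * R + s \<le> n * R"
    proof -
      have "t * R + s \<le> t * R + R" using s(1) by simp
      also have "\<dots> = Suc t * R" by simp
      also have "\<dots> \<le> n * R" using t(1) by (intro mult_right_mono) auto
      finally show ?thesis .
    qed
    ultimately show ?thesis unfolding acquainted_def by blast
  qed
  obtain p q where pq: "p < n" "q < n" "vv p = a" "vv q = b" using vv_surj ab by metis
  have "p \<noteq> q" using pq ab by auto
  then show "acquainted E strat (n * R) a b"
  proof (cases "p < q")
    case True then show ?thesis using main pq by blast
  next
    case False
    then have "q < p" using \<open>p \<noteq> q\<close> by simp
    then have "acquainted E strat (n * R) b a" using main pq by blast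
    then show ?thesis unfolding acquainted_def using Esym by blast
  qed
qed

end

theorem theorem2p1:
  fixes V :: "'a set" and E :: "'a \<Rightarrow> 'a \<Rightarrow> bool"
  assumes "fin_graph V E" and "connected_graph V E"
  shows "acquaintance_time V E \<le> 20 * max_degree V E * card V"
proof (cases "card V \<le> 1")
  case True
  have fin: "finite V" using assms(1) unfolding fin_graph_def by blast
  have "\<forall>a\<in>V. \<forall>b\<in>V. a = b" using card_le_Suc0_iff_eq[OF fin] True by simp
  then have st: "is_strategy V E (\<lambda>_. {}) 0" unfolding is_strategy_def by blast
  have "acquaintance_time V E \<le> 0" unfolding acquaintance_time_def
    by (rule Least_le) (rule exI, rule st)
  then show ?thesis by simp
next
  case False
  have "V \<noteq> {}" using assms(1) unfolding fin_graph_def by blast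
  then obtain r where r: "r \<in> V" by blast
  have c2: "2 \<le> card V" using False by simp
  interpret tgraph2 V E r
    by (unfold_locales) (rule assms(1), rule assms(2), rule r, rule c2)
  have "acquaintance_time V E \<le> n * R"
    unfolding acquaintance_time_def by (rule Least_le) (rule exI, rule strategy)
  also have "\<dots> = 15 * max_degree V E * card V" unfolding n_def R_def D_def by simp
  also have "\<dots> \<le> 20 * max_degree V E * card V" by simp
  finally show ?thesis .
qed

end
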